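(* Let $\mathcal I=\{11,12,21,22\}$ and $i\in\{1,2,3\}$. For every $J\subsetneq\mathcal I$, $$\sum_{I\subseteq\mathcal I}(-1)^{|I|}\pi\big(H_{i,I},\mathfrak C_J(H_{i,I})\big)=0.$$ Moreover, there exist constants $m_0$ and $C>0$ such that if $mp^3\le1$ and $m>m_0$, then $$\Big|\sum_{I\subseteq\mathcal I}(-1)^{|I|}\pi\big(H_{i,I},\mathfrak C_{\mathcal I}(H_{i,I})\big)\Big|\le\begin{cases}C\big(mp^5e^{-4mp^2}+(mp^3)^2e^{-4mp^2}\big),& i=1,3,\\ C\big(mp^4e^{-4mp^2}+(mp^3)^2e^{-4mp^2}\big),& i=2.\end{cases}$$
   Context: Random intersection graph $\mathcal G(n,m,p)$ ($n\ge8$): vertices $v_1,\ldots,v_n$, attributes $a_1,\ldots,a_m$; each vertex chooses each attribute independently with probability $p$; two vertices are adjacent iff they chose a common attribute. For a graph $H$, $\mathcal P(H)$ is the family of subsets of $V(H)$ containing both ends of some edge of $H$; $\mathcal C\subseteq\mathcal P(H)$ is a clique cover if each edge lies in some $C\in\mathcal C$. An attribute builds $C\subseteq V(H)$ if all vertices of $C$ and no vertex of $V(H)\setminus C$ chose it. $H$ is given by the clique cover $\mathcal C$ if each $C\in\mathcal C$ is built by some attribute and no $C\in\mathcal P(H)\setminus\mathcal C$ is built by any attribute; $\pi(H,\mathcal C)$ is its probability, and $\pi(H,\mathfrak C)=\sum_{\mathcal C\in\mathfrak C}\pi(H,\mathcal C)$. Graphs with edges labelled by $\mathcal I$: $G_1$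 is the star with centre $v$ and edges $e_{ab}=\{v,u_{ab}\}$; $G_2$ is the $4$-cycle with edges $e_{ab}=\{x_a,y_b\}$; $G_3$ is the path on $z_{12},x_1,y,x_2,z_{22}$ with $e_{11}=\{x_1,y\}$, $e_{12}=\{x_1,z_{12}\}$, $e_{21}=\{x_2,y\}$, $e_{22}=\{x_2,z_{22}\}$. $G_{i,I}$ is the subgraph of $G_i$ induced by edges $e_{ab}$, $ab\in I$. $H_{i,I}$ is a graph on $8$ vertices of $\{v_1,\ldots,v_n\}$ consisting of a copy of $G_{i,I}$, further pairwise vertex-disjoint edges $e_{ab}$, $ab\in\mathcal I\setminus I$, disjoint from $G_{i,I}$, and isolated vertices. For $J\subseteq\mathcal I$, $\mathfrak C_J(H_{i,I})$ is the family of clique covers of $H_{i,I}$ in which no edge $e_{ab}$ with $ab\in J$ is covered by a $2$-element set and every edge $e_{ab}$ with $ab\in\mathcal I\setminus J$ is covered by a $2$-element set (i.e. $e_{ab}$ itself belongs to the cover). *)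

theory Defs
  imports "HOL-Probability.Probability"
begin

datatype lab = L11 | L12 | L21 | L22

lemma UNIV_lab: "(UNIV :: lab set) = {L11, L12, L21, L22}"
  by (auto intro: lab.exhaust)

instance lab :: finite
  by standard (simp add: UNIV_lab)

text \<open>Template graphs G_1, G_2, G_3 on natural-number vertices, given by their labelled edges.
  G_1: centre v = 0, u11 = 1, u12 = 2, u21 = 3, u22 = 4.
  G_2: x1 = 0, x2 = 1, y1 = 2, y2 = 3, e_ab = {x_a, y_b}.
  G_3: x1 = 0, y = 1, x2 = 2, z12 = 3, z22 = 4.\<close>
definition Gedge :: "nat \<Rightarrow> lab \<Rightarrow> nat set" where
  "Gedge i ab =
    (if i = 1 then (case ab of L11 \<Rightarrow> {0,1} | L12 \<Rightarrow> {0,2} | L21 \<Rightarrow> {0,3} | L22 \<Rightarrow> {0,4})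
     else if i = 2 then (case ab of L11 \<Rightarrow> {0,2} | L12 \<Rightarrow> {0,3} | L21 \<Rightarrow> {1,2} | L22 \<Rightarrow> {1,3})
     else (case ab of L11 \<Rightarrow> {0,1} | L12 \<Rightarrow> {0,3} | L21 \<Rightarrow> {2,1} | L22 \<Rightarrow> {2,4}))"

definition Gverts :: "nat \<Rightarrow> lab set \<Rightarrow> nat set" where
  "Gverts i I = \<Union> (Gedge i ` I)"

text \<open>(V, e) is a graph H_{i,I} on 8 of the vertices v_0..v_{n-1}: vertex set V, labelled edges
  e ab; edges labelled by I form a copy of G_{i,I}; the other edges are pairwise vertex-disjoint
  and disjoint from the copy; remaining vertices of V are isolated. Its edge set is range e.\<close>
definition is_H :: "nat \<Rightarrow> nat \<Rightarrow> lab set \<Rightarrow> nat set \<Rightarrow> (lab \<Rightarrow> nat set) \<Rightarrow> bool" where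
  "is_H n i I V e \<longleftrightarrow>
     V \<subseteq> {..<n} \<and> card V = 8 \<and>
     (\<forall>ab. e ab \<subseteq> V \<and> card (e ab) = 2) \<and>
     (\<exists>\<phi>. inj_on \<phi> (Gverts i I) \<and> (\<forall>ab\<in>I. e ab = \<phi> ` Gedge i ab)) \<and>
     (\<forall>ab. ab \<notin> I \<longrightarrow> (\<forall>cd. cd \<noteq> ab \<longrightarrow> e ab \<inter> e cd = {}))"

definition PH :: "nat set \<Rightarrow> nat set set \<Rightarrow> nat set set" where
  "PH V E = {C. C \<subseteq> V \<and> (\<exists>ed\<in>E. ed \<subseteq> C)}"

definition clique_cover :: "nat set \<Rightarrow> nat set set \<Rightarrow> nat set set \<Rightarrow> bool" where
  "clique_cover V E \<C> \<longleftrightarrow> \<C> \<subseteq> PH V E \<and> (\<forall>ed\<in>E. \<exists>C\<in>\<C>. ed \<subseteq> C)"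

definition CC_J :: "nat set \<Rightarrow> (lab \<Rightarrow> nat set) \<Rightarrow> lab set \<Rightarrow> nat set set set" where
  "CC_J V e J = {\<C>. clique_cover V (range e) \<C> \<and>
      (\<forall>ab\<in>J. \<not> (\<exists>C\<in>\<C>. card C = 2 \<and> e ab \<subseteq> C)) \<and>
      (\<forall>ab. ab \<notin> J \<longrightarrow> e ab \<in> \<C>)}"

text \<open>Random intersection graph G(n,m,p): omega (a, v) means vertex v (v < n) chose
  attribute a (a < m); all choices independent Bernoulli(p).\<close>
definition rig :: "nat \<Rightarrow> nat \<Rightarrow> real \<Rightarrow> (nat \<times> nat \<Rightarrow> bool) pmf" where
  "rig n m p = Pi_pmf ({..<m} \<times> {..<n}) False (\<lambda>_. bernoulli_pmf p)"

definition builds :: "(nat \<times> nat \<Rightarrow> bool) \<Rightarrow> nat \<Rightarrow> nat set \<Rightarrow> nat set \<Rightarrow> bool" where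
  "builds \<omega> a V C \<longleftrightarrow> (\<forall>v\<in>C. \<omega> (a, v)) \<and> (\<forall>v\<in>V - C. \<not> \<omega> (a, v))"

definition given_by :: "nat \<Rightarrow> nat set \<Rightarrow> nat set set \<Rightarrow> nat set set \<Rightarrow> (nat \<times> nat \<Rightarrow> bool) \<Rightarrow> bool" where
  "given_by m V E \<C> \<omega> \<longleftrightarrow>
     (\<forall>C\<in>\<C>. \<exists>a<m. builds \<omega> a V C) \<and>
     (\<forall>C\<in>PH V E - \<C>. \<not> (\<exists>a<m. builds \<omega> a V C))"

definition pi_cover :: "nat \<Rightarrow> nat \<Rightarrow> real \<Rightarrow> nat set \<Rightarrow> nat set set \<Rightarrow> nat set set \<Rightarrow> real" where
  "pi_cover n m p V E \<C> = measure_pmf.prob (rig n m p) {\<omega>. given_by m V E \<C> \<omega>}"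

definition pi_family :: "nat \<Rightarrow> nat \<Rightarrow> real \<Rightarrow> nat set \<Rightarrow> nat set set \<Rightarrow> nat set set set \<Rightarrow> real" where
  "pi_family n m p V E \<FF> = (\<Sum>\<C>\<in>\<FF>. pi_cover n m p V E \<C>)"

end

theory Submission
  imports Defs
begin

lemma alt_sum_zero:
  fixes f :: "'a set \<Rightarrow> real"
  assumes U: "finite U" and a: "a \<in> U" and f: "\<And>I. I \<subseteq> U - {a} \<Longrightarrow> f (insert a I) = f I"
  shows "(\<Sum>I\<in>Pow U. (-1)^card I * f I) = 0"
proof -
  define U' where "U' = U - {a}"
  have U'': "U = insert a U'" "a \<notin> U'" "finite U'" using a U by (auto simp: U'_def)
  have "(\<Sum>I\<in>Pow U. (-1)^card I * f I) = (\<Sum>I\<in>Pow U'. (-1)^card I * f I) + (\<Sum>I\<in>insert a ` Pow U'. (-1)^card I * f I)"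
    unfolding U''(1) Pow_insert by (rule sum.union_disjoint) (use U'' in auto)
  also have "(\<Sum>I\<in>insert a ` Pow U'. (-1)^card I * f I) = (\<Sum>I\<in>Pow U'. (-1)^card (insert a I) * f (insert a I))"
    by (rule sum.reindex_cong[where l="insert a"]) (use U'' in \<open>auto simp: inj_on_def\<close>)
  also have "\<dots> = (\<Sum>I\<in>Pow U'. - ((-1)^card I * f I))"
  proof (rule sum.cong)
    fix I assume "I \<in> Pow U'"
    then have "finite I" "a \<notin> I" "I \<subseteq> U - {a}" using U''(2,3) finite_subset unfolding U'_def by auto
    then show "(-1)^card (insert a I) * f (insert a I) = - ((-1)^card I * f I)" using f by simp
  qed simp
  finally show ?thesis by (simp add: sum_negf)
qed

lemma ie_prob:
  fixes M :: "'b pmf" and C :: "'k \<Rightarrow> 'b \<Rightarrow> bool"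
  assumes "finite U"
  shows "\<And>P. measure_pmf.prob M {x. P x \<and> (\<forall>k\<in>U. C k x)} =
     (\<Sum>K\<in>Pow U. (-1)^card K * measure_pmf.prob M {x. P x \<and> (\<forall>k\<in>K. \<not> C k x)})"
  using assms
proof (induction U rule: finite_induct)
  case empty
  then show ?case by simp
next
  case (insert u U)
  have split: "measure_pmf.prob M {x. P x \<and> (\<forall>k\<in>U. C k x)} =
     measure_pmf.prob M {x. P x \<and> C u x \<and> (\<forall>k\<in>U. C k x)} + measure_pmf.prob M {x. (P x \<and> \<not> C u x) \<and> (\<forall>k\<in>U. C k x)}"
  proof -
    have "{x. P x \<and> (\<forall>k\<in>U. C k x)} = {x. P x \<and> C u x \<and> (\<forall>k\<in>U. C k x)} \<union> {x. (P x \<and> \<not> C u x) \<and> (\<forall>k\<in>U. C k x)}" by auto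
    then show ?thesis by (simp add: measure_pmf.finite_measure_Union disjoint_iff)
  qed
  have "measure_pmf.prob M {x. P x \<and> (\<forall>k\<in>insert u U. C k x)} = measure_pmf.prob M {x. P x \<and> C u x \<and> (\<forall>k\<in>U. C k x)}"
    by (rule arg_cong[where f="measure_pmf.prob M"]) auto
  also have "\<dots> = measure_pmf.prob M {x. P x \<and> (\<forall>k\<in>U. C k x)} - measure_pmf.prob M {x. (P x \<and> \<not> C u x) \<and> (\<forall>k\<in>U. C k x)}"
    using split by simp
  also have "\<dots> = (\<Sum>K\<in>Pow U. (-1)^card K * measure_pmf.prob M {x. P x \<and> (\<forall>k\<in>K. \<not> C k x)})
     + (\<Sum>K\<in>Pow U. - ((-1)^card K * measure_pmf.prob M {x. (P x \<and> \<not> C u x) \<and> (\<forall>k\<in>K. \<not> C k x)}))"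
    using insert.IH[of P] insert.IH[of "\<lambda>x. P x \<and> \<not> C u x"] by (simp add: sum_negf)
  also have "(\<Sum>K\<in>Pow U. - ((-1)^card K * measure_pmf.prob M {x. (P x \<and> \<not> C u x) \<and> (\<forall>k\<in>K. \<not> C k x)}))
     = (\<Sum>K\<in>insert u ` Pow U. (-1)^card K * measure_pmf.prob M {x. P x \<and> (\<forall>k\<in>K. \<not> C k x)})"
  proof (rule sum.reindex_cong[where l="insert u", symmetric])
    show "inj_on (insert u) (Pow U)" using insert.hyps by (auto simp: inj_on_def)
    fix K assume K: "K \<in> Pow U"
    then have "finite K" "u \<notin> K" using insert.hyps finite_subset by auto
    moreover have "{x. P x \<and> (\<forall>k\<in>insert u K. \<not> C k x)} = {x. (P x \<and> \<not> C u x) \<and> (\<forall>k\<in>K. \<not> C k x)}" by auto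
    ultimately show "(-1)^card (insert u K) * measure_pmf.prob M {x. P x \<and> (\<forall>k\<in>insert u K. \<not> C k x)} =
       - ((-1)^card K * measure_pmf.prob M {x. (P x \<and> \<not> C u x) \<and> (\<forall>k\<in>K. \<not> C k x)})" by simp
  qed simp
  also have "(\<Sum>K\<in>Pow U. (-1)^card K * measure_pmf.prob M {x. P x \<and> (\<forall>k\<in>K. \<not> C k x)}) + \<dots> =
     (\<Sum>K\<in>Pow (insert u U). (-1)^card K * measure_pmf.prob M {x. P x \<and> (\<forall>k\<in>K. \<not> C k x)})"
    unfolding Pow_insert by (rule sum.union_disjoint[symmetric]) (use insert.hyps in auto)
  finally show ?case .
qed

definition tr :: "nat set \<Rightarrow> nat \<Rightarrow> (nat \<times> nat \<Rightarrow> bool) \<Rightarrow> nat set" where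
  "tr V a \<omega> = {v\<in>V. \<omega> (a, v)}"

definition wt :: "real \<Rightarrow> nat set \<Rightarrow> nat set \<Rightarrow> real" where
  "wt p V S = p ^ card S * (1 - p) ^ (card V - card S)"

lemma prob_bern: "0 \<le> p \<Longrightarrow> p \<le> 1 \<Longrightarrow> measure_pmf.prob (bernoulli_pmf p) {b} = (if b then p else 1 - p)"
  by (cases b) (simp_all add: measure_pmf_single)

lemma row_prod:
  assumes V: "V \<subseteq> {..<n}" and S: "S \<subseteq> V" and p: "0 \<le> p" "p \<le> 1"
  shows "(\<Prod>v\<in>{..<n}. measure_pmf.prob (bernoulli_pmf p) (if v \<in> V then {v \<in> S} else UNIV)) = wt p V S"
proof -
  have fV: "finite V" using V finite_subset by blast
  have "(\<Prod>v\<in>{..<n}. measure_pmf.prob (bernoulli_pmf p) (if v \<in> V then {v \<in> S} else UNIV))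
      = (\<Prod>v\<in>{..<n}. if v \<in> V then (if v \<in> S then p else 1 - p) else 1)"
    by (rule prod.cong) (use p in \<open>auto simp: prob_bern\<close>)
  also have "\<dots> = (\<Prod>v\<in>V. if v \<in> S then p else 1 - p)"
    using V by (subst prod.If_cases) (auto intro!: prod.cong simp: Int_absorb1 Int_absorb2)
  also have "\<dots> = (\<Prod>v\<in>V \<inter> {v. v \<in> S}. p) * (\<Prod>v\<in>V \<inter> - {v. v \<in> S}. 1 - p)"
    using fV by (rule prod.If_cases)
  also have "V \<inter> {v. v \<in> S} = S" using S by auto
  also have "V \<inter> - {v. v \<in> S} = V - S" by auto
  finally show ?thesis using S fV by (simp add: wt_def card_Diff_subset finite_subset)
qed

lemma rows:
  assumes V: "V \<subseteq> {..<n}" and Y: "Y \<subseteq> Pow V" and p: "0 \<le> p" "p \<le> 1"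
  shows "measure_pmf.prob (rig n m p) {\<omega>. \<forall>a<m. tr V a \<omega> \<in> Y} = (\<Sum>S\<in>Y. wt p V S) ^ m"
proof -
  define A where "A = {..<m} \<times> {..<n}"
  define B where "B = (\<lambda>s (x :: nat \<times> nat). if snd x \<in> V then {snd x \<in> s (fst x)} else (UNIV :: bool set))"
  define PS where "PS = PiE {..<m} (\<lambda>_. Y)"
  have fV: "finite V" using V finite_subset by blast
  have fY: "finite Y" using Y fV by (meson finite_Pow_iff finite_subset)
  have fPS: "finite PS" unfolding PS_def using fY by (intro finite_PiE) auto
  have ev: "{\<omega>. \<forall>a<m. tr V a \<omega> \<in> Y} = (\<Union>s\<in>PS. Pi A (B s))"
  proof (intro equalityI subsetI)
    fix \<omega> assume "\<omega> \<in> {\<omega>. \<forall>a<m. tr V a \<omega> \<in> Y}"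
    then have h: "\<forall>a<m. tr V a \<omega> \<in> Y" by simp
    define s where "s = (\<lambda>a\<in>{..<m}. tr V a \<omega>)"
    have "s \<in> PS" using h by (auto simp: s_def PS_def)
    moreover have "\<omega> \<in> Pi A (B s)" by (auto simp: A_def B_def s_def tr_def)
    ultimately show "\<omega> \<in> (\<Union>s\<in>PS. Pi A (B s))" by blast
  next
    fix \<omega> assume "\<omega> \<in> (\<Union>s\<in>PS. Pi A (B s))"
    then obtain s where s: "s \<in> PS" "\<omega> \<in> Pi A (B s)" by blast
    have "tr V a \<omega> = s a" if a: "a < m" for a
    proof -
      have sa: "s a \<subseteq> V" using s(1) a Y by (auto simp: PS_def)
      show ?thesis
      proof (intro equalityI subsetI)
        fix v assume "v \<in> tr V a \<omega>"
        then have "v \<in> V" "\<omega> (a, v)" by (auto simp: tr_def)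
        moreover have "(a, v) \<in> A" using a \<open>v \<in> V\<close> V by (auto simp: A_def)
        ultimately show "v \<in> s a" using s(2) by (force simp: B_def)
      next
        fix v assume v: "v \<in> s a"
        then have "v \<in> V" using sa by auto
        moreover have "(a, v) \<in> A" using a \<open>v \<in> V\<close> V by (auto simp: A_def)
        ultimately show "v \<in> tr V a \<omega>" using s(2) v by (force simp: B_def tr_def)
      qed
    qed
    then show "\<omega> \<in> {\<omega>. \<forall>a<m. tr V a \<omega> \<in> Y}" using s(1) by (auto simp: PS_def)
  qed
  have disj: "disjoint_family_on (\<lambda>s. Pi A (B s)) PS"
  proof (unfold disjoint_family_on_def, intro ballI impI)
    fix s s' assume s: "s \<in> PS" "s' \<in> PS" "s \<noteq> s'"
    from s(3) obtain a where a1: "s a \<noteq> s' a" by (auto simp: fun_eq_iff)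
    have a: "a < m" "s a \<noteq> s' a"
    proof -
      show "a < m"
      proof (rule ccontr)
        assume "\<not> a < m"
        then have "s a = undefined" "s' a = undefined" using s(1,2) by (auto simp: PS_def PiE_def extensional_def)
        then show False using a1 by simp
      qed
    qed (rule a1)
    then obtain v where v: "(v \<in> s a) \<noteq> (v \<in> s' a)" by blast
    have "s a \<subseteq> V" "s' a \<subseteq> V" using s a Y by (auto simp: PS_def)
    then have "v \<in> V" using v by auto
    then have "(a, v) \<in> A" using a V by (auto simp: A_def)
    show "Pi A (B s) \<inter> Pi A (B s') = {}"
    proof (rule ccontr)
      assume "Pi A (B s) \<inter> Pi A (B s') \<noteq> {}"
      then obtain x where x: "x \<in> Pi A (B s)" "x \<in> Pi A (B s')" by blast
      have "x (a, v) \<in> B s (a, v)" "x (a, v) \<in> B s' (a, v)" using x \<open>(a, v) \<in> A\<close> by auto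
      then show False using v \<open>v \<in> V\<close> by (auto simp: B_def)
    qed
  qed
  have "measure_pmf.prob (rig n m p) {\<omega>. \<forall>a<m. tr V a \<omega> \<in> Y} = (\<Sum>s\<in>PS. measure_pmf.prob (rig n m p) (Pi A (B s)))"
    unfolding ev by (rule measure_finite_Union) (use fPS disj in \<open>auto simp: measure_pmf.emeasure_eq_measure\<close>)
  also have "\<dots> = (\<Sum>s\<in>PS. \<Prod>a<m. wt p V (s a))"
  proof (rule sum.cong)
    fix s assume s: "s \<in> PS"
    have "measure_pmf.prob (rig n m p) (Pi A (B s)) = (\<Prod>x\<in>A. measure_pmf.prob (bernoulli_pmf p) (B s x))"
      unfolding rig_def A_def by (rule measure_Pi_pmf_Pi) simp
    also have "\<dots> = (\<Prod>a<m. \<Prod>v\<in>{..<n}. measure_pmf.prob (bernoulli_pmf p) (if v \<in> V then {v \<in> s a} else UNIV))"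
      unfolding A_def prod.cartesian_product by (simp add: B_def case_prod_unfold)
    also have "\<dots> = (\<Prod>a<m. wt p V (s a))"
      by (rule prod.cong) (use s Y V p in \<open>auto simp: PS_def intro!: row_prod\<close>)
    finally show "measure_pmf.prob (rig n m p) (Pi A (B s)) = (\<Prod>a<m. wt p V (s a))" .
  qed simp
  also have "\<dots> = (\<Prod>a<m. \<Sum>S\<in>Y. wt p V S)"
    unfolding PS_def by (rule prod_sum_PiE[symmetric]) (use fY in auto)
  also have "\<dots> = (\<Sum>S\<in>Y. wt p V S) ^ m" by simp
  finally show ?thesis .
qed


lemma sup_prob:
  assumes V: "V \<subseteq> {..<n}" and U: "U \<subseteq> V" and p: "0 \<le> p" "p \<le> 1"
  shows "measure_pmf.prob (rig n 1 p) {\<omega>. U \<subseteq> tr V 0 \<omega>} = p ^ card U"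
proof -
  define A where "A = {..<(1::nat)} \<times> {..<n}"
  define B where "B = (\<lambda>(x :: nat \<times> nat). if snd x \<in> U then {True} else (UNIV :: bool set))"
  have fU: "finite U" using finite_subset[OF subset_trans[OF U V]] by simp
  have "{\<omega>. U \<subseteq> tr V 0 \<omega>} = Pi A B"
  proof (intro equalityI subsetI)
    fix \<omega> assume "\<omega> \<in> {\<omega>. U \<subseteq> tr V 0 \<omega>}"
    then have h: "\<And>v. v \<in> U \<Longrightarrow> \<omega> (0, v)" unfolding tr_def by blast
    show "\<omega> \<in> Pi A B"
    proof (rule Pi_I)
      fix x assume "x \<in> A"
      show "\<omega> x \<in> B x"
      proof (cases "snd x \<in> U")
        case True
        have "x = (0, snd x)" using \<open>x \<in> A\<close> unfolding A_def by (cases x) simp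
        then have "\<omega> x" using h[OF True] by metis
        then show ?thesis unfolding B_def using True by simp
      next
        case False
        then show ?thesis unfolding B_def by simp
      qed
    qed
  next
    fix \<omega> assume w: "\<omega> \<in> Pi A B"
    have "\<omega> (0, v)" if "v \<in> U" for v
    proof -
      have "v < n" using that U V by blast
      then have "(0, v) \<in> A" unfolding A_def by simp
      then have "\<omega> (0, v) \<in> B (0, v)" using w by blast
      then show ?thesis using that unfolding B_def by simp
    qed
    then show "\<omega> \<in> {\<omega>. U \<subseteq> tr V 0 \<omega>}" using U unfolding tr_def by blast
  qed
  then have "measure_pmf.prob (rig n 1 p) {\<omega>. U \<subseteq> tr V 0 \<omega>} = (\<Prod>x\<in>A. measure_pmf.prob (bernoulli_pmf p) (B x))"
    unfolding rig_def A_def by (simp only: measure_Pi_pmf_Pi finite_SigmaI finite_lessThan)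
  also have "\<dots> = (\<Prod>a<(1::nat). \<Prod>v\<in>{..<n}. measure_pmf.prob (bernoulli_pmf p) (if v \<in> U then {True} else UNIV))"
    unfolding A_def prod.cartesian_product by (simp add: B_def case_prod_unfold)
  also have "\<dots> = (\<Prod>v\<in>{..<n}. measure_pmf.prob (bernoulli_pmf p) (if v \<in> U then {True} else UNIV))"
    by simp
  also have "\<dots> = (\<Prod>v\<in>{..<n}. if v \<in> U then p else 1)"
    by (rule prod.cong) (use p in \<open>auto simp: prob_bern\<close>)
  also have "\<dots> = (\<Prod>v\<in>{..<n} \<inter> {v. v \<in> U}. p) * (\<Prod>v\<in>{..<n} \<inter> - {v. v \<in> U}. 1)"
    by (rule prod.If_cases) simp
  also have "{..<n} \<inter> {v. v \<in> U} = U" using U V by auto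
  finally show ?thesis by simp
qed

lemma builds_tr: "C \<subseteq> V \<Longrightarrow> builds \<omega> a V C \<longleftrightarrow> tr V a \<omega> = C"
  unfolding builds_def tr_def by auto

definition good :: "(lab \<Rightarrow> nat set) \<Rightarrow> lab set \<Rightarrow> lab \<Rightarrow> nat set \<Rightarrow> bool" where
  "good e J k S = (if k \<in> J then e k \<subseteq> S \<and> S \<noteq> e k else S = e k)"

definition Tset :: "nat \<Rightarrow> nat set \<Rightarrow> nat set set \<Rightarrow> (nat \<times> nat \<Rightarrow> bool) \<Rightarrow> nat set set" where
  "Tset m V E \<omega> = {C \<in> PH V E. \<exists>a<m. builds \<omega> a V C}"

lemma given_by_iff: "\<C> \<subseteq> PH V E \<Longrightarrow> given_by m V E \<C> \<omega> \<longleftrightarrow> \<C> = Tset m V E \<omega>"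
  unfolding given_by_def Tset_def by blast

lemma finite_PH: "finite V \<Longrightarrow> finite (PH V E)"
  unfolding PH_def by (rule finite_subset[of _ "Pow V"]) auto

lemma pi_family_prob:
  assumes fV: "finite V" and fam: "\<FF> \<subseteq> Pow (PH V E)"
  shows "pi_family n m p V E \<FF> = measure_pmf.prob (rig n m p) {\<omega>. Tset m V E \<omega> \<in> \<FF>}"
proof -
  have fF: "finite \<FF>" using fam finite_PH[OF fV] by (meson finite_Pow_iff finite_subset)
  have gb: "given_by m V E \<C> \<omega> \<longleftrightarrow> \<C> = Tset m V E \<omega>" if "\<C> \<in> \<FF>" for \<C> \<omega>
  proof -
    have "\<C> \<subseteq> PH V E" using fam that by auto
    then show ?thesis by (rule given_by_iff)
  qed
  have ev: "{\<omega>. Tset m V E \<omega> \<in> \<FF>} = (\<Union>\<C>\<in>\<FF>. {\<omega>. given_by m V E \<C> \<omega>})"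
  proof (intro equalityI subsetI)
    fix \<omega> assume "\<omega> \<in> {\<omega>. Tset m V E \<omega> \<in> \<FF>}"
    then show "\<omega> \<in> (\<Union>\<C>\<in>\<FF>. {\<omega>. given_by m V E \<C> \<omega>})" using gb by auto
  next
    fix \<omega> assume "\<omega> \<in> (\<Union>\<C>\<in>\<FF>. {\<omega>. given_by m V E \<C> \<omega>})"
    then obtain \<C> where "\<C> \<in> \<FF>" "given_by m V E \<C> \<omega>" by blast
    then show "\<omega> \<in> {\<omega>. Tset m V E \<omega> \<in> \<FF>}" using gb by auto
  qed
  have disj: "disjoint_family_on (\<lambda>\<C>. {\<omega>. given_by m V E \<C> \<omega>}) \<FF>"
    unfolding disjoint_family_on_def
  proof (intro ballI impI)
    fix C1 C2 assume "C1 \<in> \<FF>" "C2 \<in> \<FF>" "C1 \<noteq> C2"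
    then show "{\<omega>. given_by m V E C1 \<omega>} \<inter> {\<omega>. given_by m V E C2 \<omega>} = {}" using gb by auto
  qed
  show ?thesis unfolding ev pi_family_def pi_cover_def
    by (rule measure_finite_Union[symmetric]) (use fF disj in \<open>auto simp: measure_pmf.emeasure_eq_measure\<close>)
qed

lemma tr_sub: "tr V a \<omega> \<subseteq> V" unfolding tr_def by auto

lemma mem_Tset:
  "C \<in> Tset m V (range e) \<omega> \<longleftrightarrow> C \<subseteq> V \<and> (\<exists>k. e k \<subseteq> C) \<and> (\<exists>a<m. tr V a \<omega> = C)"
proof -
  have "C \<in> Tset m V (range e) \<omega> \<longleftrightarrow> C \<subseteq> V \<and> (\<exists>k. e k \<subseteq> C) \<and> (\<exists>a<m. builds \<omega> a V C)"
    unfolding Tset_def PH_def by auto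
  also have "\<dots> \<longleftrightarrow> C \<subseteq> V \<and> (\<exists>k. e k \<subseteq> C) \<and> (\<exists>a<m. tr V a \<omega> = C)"
    using builds_tr by blast
  finally show ?thesis .
qed

lemma card2_eq: "finite C \<Longrightarrow> card C = 2 \<Longrightarrow> card D = 2 \<Longrightarrow> D \<subseteq> C \<Longrightarrow> C = D"
  by (metis card_subset_eq)

lemma Tset_char:
  assumes fV: "finite V" and E: "\<And>ab. e ab \<subseteq> V" "\<And>ab. card (e ab) = 2"
  shows "Tset m V (range e) \<omega> \<in> CC_J V e J \<longleftrightarrow>
    (\<forall>a<m. tr V a \<omega> \<notin> e ` J) \<and> (\<forall>k\<in>UNIV. \<exists>a<m. good e J k (tr V a \<omega>))"
    (is "?L \<longleftrightarrow> ?R")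
proof
  assume L: ?L
  let ?T = "Tset m V (range e) \<omega>"
  have h1: "\<And>k. \<exists>C\<in>?T. e k \<subseteq> C" using L unfolding CC_J_def clique_cover_def by blast
  have h2: "\<And>ab C. ab \<in> J \<Longrightarrow> C \<in> ?T \<Longrightarrow> card C = 2 \<Longrightarrow> e ab \<subseteq> C \<Longrightarrow> False"
    using L unfolding CC_J_def by blast
  have h3: "\<And>ab. ab \<notin> J \<Longrightarrow> e ab \<in> ?T" using L unfolding CC_J_def by blast
  have r1: "\<forall>a<m. tr V a \<omega> \<notin> e ` J"
  proof (intro allI impI notI)
    fix a assume a: "a < m" and "tr V a \<omega> \<in> e ` J"
    then obtain j where j: "j \<in> J" "tr V a \<omega> = e j" by blast
    have "e j \<in> ?T" unfolding mem_Tset using E(1)[of j] a j by auto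
    then show False using h2[OF j(1) _ E(2)[of j]] by blast
  qed
  have r2: "\<exists>a<m. good e J k (tr V a \<omega>)" for k
  proof (cases "k \<in> J")
    case True
    obtain C where C: "C \<in> ?T" "e k \<subseteq> C" using h1 by blast
    then obtain a where a: "a < m" "tr V a \<omega> = C" unfolding mem_Tset by blast
    have "C \<noteq> e k" using h2[OF True C(1) _ C(2)] E(2)[of k] by auto
    then show ?thesis using a C True unfolding good_def by auto
  next
    case False
    then have "e k \<in> ?T" by (rule h3)
    then obtain a where a: "a < m" "tr V a \<omega> = e k" unfolding mem_Tset by blast
    then show ?thesis using False unfolding good_def by auto
  qed
  show ?R using r1 r2 by blast
next
  assume R: ?R
  let ?T = "Tset m V (range e) \<omega>"
  have g1: "\<And>a j. a < m \<Longrightarrow> j \<in> J \<Longrightarrow> tr V a \<omega> \<noteq> e j" using R by blast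
  have g2: "\<And>k. \<exists>a<m. good e J k (tr V a \<omega>)" using R by blast
  have sub: "?T \<subseteq> PH V (range e)" unfolding Tset_def by blast
  have cov: "\<forall>ed\<in>range e. \<exists>C\<in>?T. ed \<subseteq> C"
  proof
    fix ed assume "ed \<in> range e"
    then obtain k where k: "ed = e k" by blast
    obtain a where a: "a < m" "good e J k (tr V a \<omega>)" using g2 by blast
    then have "e k \<subseteq> tr V a \<omega>" unfolding good_def by (auto split: if_splits)
    moreover have "tr V a \<omega> \<in> ?T" unfolding mem_Tset using tr_sub a(1) calculation by blast
    ultimately show "\<exists>C\<in>?T. ed \<subseteq> C" using k by blast
  qed
  have c2: "\<forall>ab\<in>J. \<not> (\<exists>C\<in>?T. card C = 2 \<and> e ab \<subseteq> C)"
  proof (intro ballI notI)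
    fix ab assume ab: "ab \<in> J" and "\<exists>C\<in>?T. card C = 2 \<and> e ab \<subseteq> C"
    then obtain C where C: "C \<in> ?T" "card C = 2" "e ab \<subseteq> C" by blast
    then obtain a where a: "a < m" "tr V a \<omega> = C" "C \<subseteq> V" unfolding mem_Tset by blast
    have "C = e ab" using card2_eq[OF finite_subset[OF a(3) fV] C(2) E(2)[of ab] C(3)] .
    then show False using g1[OF a(1) ab] a(2) by simp
  qed
  have c3: "\<forall>ab. ab \<notin> J \<longrightarrow> e ab \<in> ?T"
  proof (intro allI impI)
    fix ab assume ab: "ab \<notin> J"
    obtain a where a: "a < m" "good e J ab (tr V a \<omega>)" using g2 by blast
    then have "tr V a \<omega> = e ab" using ab unfolding good_def by simp
    then show "e ab \<in> ?T" unfolding mem_Tset using a(1) E(1)[of ab] by blast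
  qed
  show ?L unfolding CC_J_def clique_cover_def using sub cov c2 c3 by blast
qed

definition xval :: "real \<Rightarrow> (lab \<Rightarrow> nat set) \<Rightarrow> lab set \<Rightarrow> lab set \<Rightarrow> real" where
  "xval p e J K = (\<Sum>L\<in>Pow (K \<inter> J). (-1) ^ card L * p ^ card (\<Union> (e ` L)))
      - real (card ((J - K) \<union> (K - J))) * (p ^ 2 * (1 - p) ^ 6)"

definition Yset :: "nat set \<Rightarrow> (lab \<Rightarrow> nat set) \<Rightarrow> lab set \<Rightarrow> lab set \<Rightarrow> nat set set" where
  "Yset V e J K = {S. S \<subseteq> V \<and> S \<notin> e ` J \<and> (\<forall>k\<in>K. \<not> good e J k S)}"

lemma Yset_sum:
  assumes V: "V \<subseteq> {..<n}" "card V = 8" and E: "\<And>ab. e ab \<subseteq> V" "\<And>ab. card (e ab) = 2"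
    and inj: "inj e" and p: "0 \<le> p" "p \<le> 1"
  shows "(\<Sum>S\<in>Yset V e J K. wt p V S) = xval p e J K"
proof -
  define Z where "Z = {S. S \<subseteq> V \<and> (\<forall>k\<in>K \<inter> J. \<not> e k \<subseteq> S)}"
  define D where "D = (J - K) \<union> (K - J)"
  have fV: "finite V" using V(1) finite_subset by auto
  have fZ: "finite Z" unfolding Z_def by (rule finite_subset[of _ "Pow V"]) (use fV in auto)
  have Y: "Yset V e J K = Z - e ` D"
  proof (intro equalityI subsetI)
    fix S assume "S \<in> Yset V e J K"
    then have S: "S \<subseteq> V" "S \<notin> e ` J" "\<And>k. k \<in> K \<Longrightarrow> \<not> good e J k S" unfolding Yset_def by auto
    have "\<not> e k \<subseteq> S" if k: "k \<in> K \<inter> J" for k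
    proof
      assume "e k \<subseteq> S"
      then have "S = e k" using S(3)[of k] k unfolding good_def by auto
      then show False using S(2) k by auto
    qed
    moreover have "S \<notin> e ` D"
    proof
      assume "S \<in> e ` D"
      then obtain d where d: "d \<in> D" "S = e d" by blast
      then show False
      proof (cases "d \<in> J")
        case True then show False using d S(2) by auto
      next
        case False then have "d \<in> K" using d unfolding D_def by auto
        then show False using S(3)[of d] False d unfolding good_def by auto
      qed
    qed
    ultimately show "S \<in> Z - e ` D" using S(1) unfolding Z_def by auto
  next
    fix S assume "S \<in> Z - e ` D"
    then have S: "S \<subseteq> V" "\<And>k. k \<in> K \<inter> J \<Longrightarrow> \<not> e k \<subseteq> S" "S \<notin> e ` D" unfolding Z_def by auto
    have "S \<notin> e ` J"
    proof
      assume "S \<in> e ` J"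
      then obtain j where j: "j \<in> J" "S = e j" by blast
      show False
      proof (cases "j \<in> K")
        case True then show False using S(2)[of j] j by auto
      next
        case False then show False using S(3) j unfolding D_def by auto
      qed
    qed
    moreover have "\<not> good e J k S" if k: "k \<in> K" for k
    proof (cases "k \<in> J")
      case True then show ?thesis using S(2)[of k] k unfolding good_def by auto
    next
      case False then have "k \<in> D" using k unfolding D_def by auto
      then show ?thesis using S(3) False unfolding good_def by auto
    qed
    ultimately show "S \<in> Yset V e J K" using S(1) unfolding Yset_def by auto
  qed
  have eDZ: "e ` D \<subseteq> Z"
  proof
    fix S assume "S \<in> e ` D"
    then obtain d where d: "d \<in> D" "S = e d" by blast
    have "\<not> e k \<subseteq> e d" if k: "k \<in> K \<inter> J" for k
    proof
      assume "e k \<subseteq> e d"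
      then have "e d = e k" using card2_eq[OF finite_subset[OF E(1) fV] E(2) E(2)] by blast
      then have "d = k" using inj by (simp add: inj_eq)
      then show False using d(1) k unfolding D_def by auto
    qed
    then show "S \<in> Z" using d E(1) unfolding Z_def by auto
  qed
  have sD: "(\<Sum>S\<in>e ` D. wt p V S) = real (card D) * (p ^ 2 * (1 - p) ^ 6)"
  proof -
    have "(\<Sum>S\<in>e ` D. wt p V S) = (\<Sum>d\<in>D. wt p V (e d))"
      using sum.reindex[OF inj_on_subset[OF inj subset_UNIV], of "wt p V" D] by (simp add: o_def)
    also have "\<dots> = (\<Sum>d\<in>D. p ^ 2 * (1 - p) ^ 6)"
      by (rule sum.cong) (simp_all add: wt_def E(2) V(2))
    finally show ?thesis by simp
  qed
  have sZ: "(\<Sum>S\<in>Z. wt p V S) = (\<Sum>L\<in>Pow (K \<inter> J). (-1) ^ card L * p ^ card (\<Union> (e ` L)))"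
  proof -
    have "(\<Sum>S\<in>Z. wt p V S) = (\<Sum>S\<in>Z. wt p V S) ^ 1" by simp
    also have "\<dots> = measure_pmf.prob (rig n 1 p) {\<omega>. \<forall>a<1. tr V a \<omega> \<in> Z}"
      by (rule rows[symmetric]) (use V p in \<open>auto simp: Z_def\<close>)
    also have "{\<omega>. \<forall>a<(1::nat). tr V a \<omega> \<in> Z} = {\<omega>. True \<and> (\<forall>k\<in>K \<inter> J. \<not> e k \<subseteq> tr V 0 \<omega>)}"
      unfolding Z_def using tr_sub by auto
    also have "measure_pmf.prob (rig n 1 p) \<dots> =
       (\<Sum>L\<in>Pow (K \<inter> J). (-1) ^ card L * measure_pmf.prob (rig n 1 p) {\<omega>. True \<and> (\<forall>k\<in>L. \<not> \<not> e k \<subseteq> tr V 0 \<omega>)})"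
      by (rule ie_prob) simp
    also have "\<dots> = (\<Sum>L\<in>Pow (K \<inter> J). (-1) ^ card L * p ^ card (\<Union> (e ` L)))"
    proof (rule sum.cong)
      fix L assume "L \<in> Pow (K \<inter> J)"
      have "{\<omega>. True \<and> (\<forall>k\<in>L. \<not> \<not> e k \<subseteq> tr V 0 \<omega>)} = {\<omega>. \<Union> (e ` L) \<subseteq> tr V 0 \<omega>}" by auto
      moreover have "\<Union> (e ` L) \<subseteq> V" using E(1) by auto
      ultimately show "(-1) ^ card L * measure_pmf.prob (rig n 1 p) {\<omega>. True \<and> (\<forall>k\<in>L. \<not> \<not> e k \<subseteq> tr V 0 \<omega>)}
         = (-1) ^ card L * p ^ card (\<Union> (e ` L))" using sup_prob[OF V(1) _ p] by simp
    qed simp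
    finally show ?thesis .
  qed
  show ?thesis unfolding Y xval_def using sum_diff[OF fZ eDZ, of "wt p V"] sZ sD D_def by simp
qed

lemma pi_formula:
  assumes V: "V \<subseteq> {..<n}" "card V = 8" and E: "\<And>ab. e ab \<subseteq> V" "\<And>ab. card (e ab) = 2"
    and inj: "inj e" and p: "0 \<le> p" "p \<le> 1"
  shows "pi_family n m p V (range e) (CC_J V e J) = (\<Sum>K\<in>Pow UNIV. (-1) ^ card K * xval p e J K ^ m)"
proof -
  have fV: "finite V" using V(1) finite_subset by auto
  have fam: "CC_J V e J \<subseteq> Pow (PH V (range e))" unfolding CC_J_def clique_cover_def by auto
  have "pi_family n m p V (range e) (CC_J V e J) = measure_pmf.prob (rig n m p) {\<omega>. Tset m V (range e) \<omega> \<in> CC_J V e J}"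
    by (rule pi_family_prob[OF fV fam])
  also have "{\<omega>. Tset m V (range e) \<omega> \<in> CC_J V e J} =
     {\<omega>. (\<forall>a<m. tr V a \<omega> \<notin> e ` J) \<and> (\<forall>k\<in>UNIV. \<exists>a<m. good e J k (tr V a \<omega>))}"
    by (rule Collect_cong) (rule Tset_char[OF fV E])
  also have "measure_pmf.prob (rig n m p) \<dots> = (\<Sum>K\<in>Pow UNIV. (-1) ^ card K *
     measure_pmf.prob (rig n m p) {\<omega>. (\<forall>a<m. tr V a \<omega> \<notin> e ` J) \<and> (\<forall>k\<in>K. \<not> (\<exists>a<m. good e J k (tr V a \<omega>)))})"
    by (rule ie_prob) simp
  also have "\<dots> = (\<Sum>K\<in>Pow UNIV. (-1) ^ card K * xval p e J K ^ m)"
  proof (rule sum.cong)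
    fix K :: "lab set"
    have "{\<omega>. (\<forall>a<m. tr V a \<omega> \<notin> e ` J) \<and> (\<forall>k\<in>K. \<not> (\<exists>a<m. good e J k (tr V a \<omega>)))} =
       {\<omega>. \<forall>a<m. tr V a \<omega> \<in> Yset V e J K}"
      by (rule Collect_cong) (auto simp: Yset_def tr_sub)
    moreover have "Yset V e J K \<subseteq> Pow V" unfolding Yset_def by auto
    then have "measure_pmf.prob (rig n m p) {\<omega>. \<forall>a<m. tr V a \<omega> \<in> Yset V e J K} = xval p e J K ^ m"
      using rows[OF V(1) _ p, of "Yset V e J K" m] Yset_sum[OF V E inj p, of J K] by simp
    ultimately show "(-1) ^ card K * measure_pmf.prob (rig n m p) {\<omega>. (\<forall>a<m. tr V a \<omega> \<notin> e ` J) \<and> (\<forall>k\<in>K. \<not> (\<exists>a<m. good e J k (tr V a \<omega>)))}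
       = (-1) ^ card K * xval p e J K ^ m" by simp
  qed simp
  finally show ?thesis .
qed

lemma lab_set_cases:
  fixes I :: "lab set"
  shows "I = (if L11 \<in> I then {L11} else {}) \<union> (if L12 \<in> I then {L12} else {}) \<union>
             (if L21 \<in> I then {L21} else {}) \<union> (if L22 \<in> I then {L22} else {})"
  by (auto split: if_splits) (metis lab.exhaust)+

lemma lab_set_all:
  assumes "P {}" "P {L11}" "P {L12}" "P {L21}" "P {L22}"
    "P {L12, L11}" "P {L21, L11}" "P {L22, L11}" "P {L21, L12}" "P {L22, L12}" "P {L22, L21}"
    "P {L21, L12, L11}" "P {L22, L12, L11}" "P {L22, L21, L11}" "P {L22, L21, L12}"
    "P {L22, L21, L12, L11}"
  shows "P I"
proof -
  have eq: "I = (if L11 \<in> I then {L11} else {}) \<union> (if L12 \<in> I then {L12} else {}) \<union>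
             (if L21 \<in> I then {L21} else {}) \<union> (if L22 \<in> I then {L22} else {})"
    by (rule lab_set_cases)
  show ?thesis
    by (cases "L11 \<in> I"; cases "L12 \<in> I"; cases "L21 \<in> I"; cases "L22 \<in> I"; subst eq; simp add: assms)
qed

lemma card_Gedge: "card (Gedge i l) = 2"
  by (cases l) (auto simp: Gedge_def)

lemma hU_ge:
  fixes I :: "lab set"
  shows "card (Gverts i I) + 2 * card (UNIV - I) \<ge> (if i = 2 then 4 else 5)"
  by (rule lab_set_all[where P = "\<lambda>I. card (Gverts i I) + 2 * card (UNIV - I) \<ge> (if i = 2 then 4 else 5)"];
      simp add: Gverts_def Gedge_def UNIV_lab card_insert_if)


definition hh :: "nat \<Rightarrow> lab set \<Rightarrow> lab set \<Rightarrow> nat" where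
  "hh i I L = card (Gverts i (L \<inter> I)) + 2 * card (L - I)"

lemma finite_Gedge: "finite (Gedge i l)"
  by (cases l) (auto simp: Gedge_def)

lemma Gedge_inj: "Gedge i a = Gedge i b \<Longrightarrow> a = b"
  by (cases a; cases b; auto simp: Gedge_def doubleton_eq_iff split: if_splits)

lemma isH_basic:
  assumes "is_H n i I V e"
  shows "V \<subseteq> {..<n}" "card V = 8" "\<And>ab. e ab \<subseteq> V" "\<And>ab. card (e ab) = 2" "finite V"
proof -
  show "V \<subseteq> {..<n}" "card V = 8" "\<And>ab. e ab \<subseteq> V" "\<And>ab. card (e ab) = 2"
    using assms unfolding is_H_def by auto
  then show "finite V" by (intro card_ge_0_finite) simp
qed

lemma isH_phi:
  assumes "is_H n i I V e"
  shows "\<exists>\<phi>. inj_on \<phi> (Gverts i I) \<and> (\<forall>ab\<in>I. e ab = \<phi> ` Gedge i ab)"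
  using assms unfolding is_H_def by (elim conjE) assumption

lemma isH_dis:
  assumes "is_H n i I V e"
  shows "\<forall>ab. ab \<notin> I \<longrightarrow> (\<forall>cd. cd \<noteq> ab \<longrightarrow> e ab \<inter> e cd = {})"
  using assms unfolding is_H_def by (elim conjE) assumption

lemma isH_inj:
  assumes H: "is_H n i I V e"
  shows "inj e"
proof (rule injI)
  fix a b assume eq: "e a = e b"
  obtain \<phi> where phi: "inj_on \<phi> (Gverts i I)" "\<And>ab. ab \<in> I \<Longrightarrow> e ab = \<phi> ` Gedge i ab"
    using isH_phi[OF H] by blast
  have dis: "\<And>ab cd. ab \<notin> I \<Longrightarrow> cd \<noteq> ab \<Longrightarrow> e ab \<inter> e cd = {}"
    using isH_dis[OF H] by blast
  have ne: "\<And>ab. e ab \<noteq> {}" using isH_basic(4)[OF H] by (metis card.empty zero_neq_numeral)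
  show "a = b"
  proof (rule ccontr)
    assume ab: "a \<noteq> b"
    show False
    proof (cases "a \<in> I")
      case False
      then show False using dis[OF False, of b] ab eq ne[of a] by auto
    next
      case aI: True
      show False
      proof (cases "b \<in> I")
        case False
        then show False using dis[OF False, of a] ab eq ne[of a] by auto
      next
        case bI: True
        have sub: "Gedge i a \<subseteq> Gverts i I" "Gedge i b \<subseteq> Gverts i I" using aI bI unfolding Gverts_def by auto
        have "\<phi> ` Gedge i a = \<phi> ` Gedge i b" using eq phi(2)[OF aI] phi(2)[OF bI] by simp
        then have "Gedge i a = Gedge i b" using inj_on_image_eq_iff[OF phi(1) sub] by simp
        then show False using Gedge_inj ab by blast
      qed
    qed
  qed
qed

lemma isH_ucard:
  assumes H: "is_H n i I V e"
  shows "card (\<Union> (e ` L)) = hh i I L"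
proof -
  obtain \<phi> where phi: "inj_on \<phi> (Gverts i I)" "\<And>ab. ab \<in> I \<Longrightarrow> e ab = \<phi> ` Gedge i ab"
    using isH_phi[OF H] by blast
  have dis: "\<And>ab cd. ab \<notin> I \<Longrightarrow> cd \<noteq> ab \<Longrightarrow> e ab \<inter> e cd = {}"
    using isH_dis[OF H] by blast
  note B = isH_basic[OF H]
  have fe: "\<And>ab. finite (e ab)" using finite_subset[OF B(3) B(5)] by simp
  have split: "\<Union> (e ` L) = \<phi> ` Gverts i (L \<inter> I) \<union> \<Union> (e ` (L - I))"
  proof -
    have "\<Union> (e ` L) = \<Union> (e ` (L \<inter> I)) \<union> \<Union> (e ` (L - I))" by blast
    moreover have "\<Union> (e ` (L \<inter> I)) = \<phi> ` Gverts i (L \<inter> I)"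
      unfolding Gverts_def image_Union using phi(2) by auto
    ultimately show ?thesis by simp
  qed
  have c1: "card (\<phi> ` Gverts i (L \<inter> I)) = card (Gverts i (L \<inter> I))"
    by (rule card_image, rule inj_on_subset[OF phi(1)]) (auto simp: Gverts_def)
  have c2: "card (\<Union> (e ` (L - I))) = 2 * card (L - I)"
  proof -
    have "card (\<Union> (e ` (L - I))) = (\<Sum>l\<in>L - I. card (e l))"
      by (rule card_UN_disjoint) (use fe dis in auto)
    then show ?thesis using B(4) by simp
  qed
  have d: "\<phi> ` Gverts i (L \<inter> I) \<inter> \<Union> (e ` (L - I)) = {}"
  proof -
    have "\<phi> ` Gverts i (L \<inter> I) = \<Union> (e ` (L \<inter> I))"
      unfolding Gverts_def image_Union using phi(2) by auto
    moreover have "\<Union> (e ` (L \<inter> I)) \<inter> \<Union> (e ` (L - I)) = {}"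
    proof -
      have "e l' \<inter> e l = {}" if "l' \<in> L \<inter> I" "l \<in> L - I" for l l'
        using dis[of l l'] that by auto
      then show ?thesis by blast
    qed
    ultimately show ?thesis by simp
  qed
  have f1: "finite (\<phi> ` Gverts i (L \<inter> I))"
    by (rule finite_imageI) (auto simp: Gverts_def finite_Gedge)
  have f2: "finite (\<Union> (e ` (L - I)))" using fe by simp
  show ?thesis unfolding split hh_def using card_Un_disjoint[OF f1 f2 d] c1 c2 by simp
qed

lemma two_sets:
  assumes "finite A" "finite B" "card A = 2" "card B = 2" "A \<noteq> B"
  shows "3 \<le> card (A \<union> B)"
proof -
  have "A \<inter> B \<subset> A"
  proof
    show "A \<inter> B \<subseteq> A" by blast
    show "A \<inter> B \<noteq> A"
    proof
      assume "A \<inter> B = A"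
      then have "A \<subseteq> B" by blast
      then have "A = B" using card_subset_eq[OF assms(2)] assms(3,4) by simp
      then show False using assms(5) by simp
    qed
  qed
  then have "card (A \<inter> B) < card A" by (rule psubset_card_mono[OF assms(1)])
  moreover have "card (A \<union> B) + card (A \<inter> B) = card A + card B" using card_Un_Int[OF assms(1,2)] by simp
  ultimately show ?thesis using assms(3,4) by simp
qed

lemma hh_ge3:
  assumes H: "is_H n i I V e" and L: "2 \<le> card L"
  shows "3 \<le> hh i I L"
proof -
  note B = isH_basic[OF H]
  have fe: "\<And>ab. finite (e ab)" using finite_subset[OF B(3) B(5)] by simp
  obtain l1 where l1: "l1 \<in> L" using L by fastforce
  have "card (L - {l1}) \<ge> 1" using L l1 by (simp add: card_Diff_singleton)
  then have "L - {l1} \<noteq> {}" by (metis card.empty not_one_le_zero)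
  then obtain l2 where l2: "l2 \<in> L - {l1}" by blast
  have ne: "e l1 \<noteq> e l2" using isH_inj[OF H] l2 by (auto simp: inj_eq)
  have "3 \<le> card (e l1 \<union> e l2)" by (rule two_sets[OF fe fe B(4) B(4) ne])
  also have "\<dots> \<le> card (\<Union> (e ` L))"
  proof (rule card_mono)
    show "finite (\<Union> (e ` L))" using fe finite_subset[OF _ B(5), of "\<Union> (e ` L)"] B(3) by blast
    show "e l1 \<union> e l2 \<subseteq> \<Union> (e ` L)" using l1 l2 by blast
  qed
  finally show ?thesis using isH_ucard[OF H] by simp
qed

lemma hh_le1:
  assumes L: "card L \<le> 1"
  shows "hh i I L = 2 * card L"
proof (cases "L = {}")
  case True then show ?thesis by (simp add: hh_def Gverts_def)
next
  case False
  have "finite L" by simp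
  then have "card L \<noteq> 0" using False by simp
  then have "card L = 1" using L by linarith
  then obtain l where l: "L = {l}" by (rule card_1_singletonE)
  show ?thesis
  proof (cases "l \<in> I")
    case True
    then have "Gverts i (L \<inter> I) = Gedge i l" using l by (simp add: Gverts_def)
    then show ?thesis using True l card_Gedge by (simp add: hh_def)
  next
    case False
    then have "{l} - I = {l}" "{l} \<inter> I = {}" by auto
    then show ?thesis using l by (simp add: hh_def Gverts_def)
  qed
qed

lemma hh_empty: "hh i {} L = 2 * card L"
  by (simp add: hh_def Gverts_def)

lemma taylor2:
  fixes a b M :: real
  assumes "0 \<le> a" "a \<le> M" "0 \<le> b" "b \<le> M"
  shows "\<bar>b ^ (k + 2) - a ^ (k + 2) - real (k + 2) * a ^ (k + 1) * (b - a)\<bar> \<le> real ((k + 1) ^ 2) * M ^ k * (b - a) ^ 2"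
proof (induction k)
  case 0
  have eq: "b ^ (0 + 2) - a ^ (0 + 2) - real (0 + 2) * a ^ (0 + 1) * (b - a) = (b - a) ^ 2"
    by (simp add: power2_eq_square algebra_simps)
  show ?case by (subst eq) simp
next
  case (Suc k)
  define T where "T = b ^ (k + 2) - a ^ (k + 2) - real (k + 2) * a ^ (k + 1) * (b - a)"
  have id: "b ^ (Suc k + 2) - a ^ (Suc k + 2) - real (Suc k + 2) * a ^ (Suc k + 1) * (b - a)
      = b * T + real (k + 2) * a ^ (k + 1) * (b - a) ^ 2"
    unfolding T_def by (simp add: power2_eq_square algebra_simps)
  have M0: "0 \<le> M" using assms by linarith
  have h1: "\<bar>b * T\<bar> \<le> M * (real ((k + 1) ^ 2) * M ^ k * (b - a) ^ 2)"
  proof -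
    have "\<bar>b * T\<bar> = b * \<bar>T\<bar>" using assms(3) by (simp add: abs_mult)
    also have "\<dots> \<le> M * \<bar>T\<bar>" using assms(4) by (intro mult_right_mono) simp_all
    also have "\<dots> \<le> M * (real ((k + 1) ^ 2) * M ^ k * (b - a) ^ 2)"
      using Suc.IH M0 unfolding T_def by (intro mult_left_mono) simp_all
    finally show ?thesis .
  qed
  have h2: "\<bar>real (k + 2) * a ^ (k + 1) * (b - a) ^ 2\<bar> \<le> real (k + 2) * M ^ (k + 1) * (b - a) ^ 2"
  proof -
    have "a ^ (k + 1) \<le> M ^ (k + 1)" using assms by (intro power_mono) simp_all
    then show ?thesis using assms by (simp add: abs_mult mult_right_mono)
  qed
  have "\<bar>b * T + real (k + 2) * a ^ (k + 1) * (b - a) ^ 2\<bar>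
      \<le> M * (real ((k + 1) ^ 2) * M ^ k * (b - a) ^ 2) + real (k + 2) * M ^ (k + 1) * (b - a) ^ 2"
    using h1 h2 abs_triangle_ineq[of "b * T"] by linarith
  also have "\<dots> = (real ((k + 1) ^ 2) + real (k + 2)) * M ^ (k + 1) * (b - a) ^ 2"
    by (simp add: algebra_simps)
  also have "\<dots> \<le> real ((Suc k + 1) ^ 2) * M ^ Suc k * (b - a) ^ 2"
  proof -
    have "real ((k + 1) ^ 2) + real (k + 2) \<le> real ((Suc k + 1) ^ 2)" by (simp add: power2_eq_square algebra_simps)
    moreover have "0 \<le> M ^ (k + 1) * (b - a) ^ 2" using M0 by simp
    ultimately show ?thesis using mult_right_mono by (metis Suc_eq_plus1 mult.assoc)
  qed
  finally show ?case using id by simp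
qed

lemma exp_pow_bound:
  fixes M :: real
  assumes "0 \<le> M"
  shows "M ^ k \<le> exp (real k * (M - 1))"
proof -
  have "M \<le> exp (M - 1)" using exp_ge_add_one_self[of "M - 1"] by simp
  then have "M ^ k \<le> exp (M - 1) ^ k" using assms by (intro power_mono) simp_all
  also have "\<dots> = exp (real k * (M - 1))" by (simp add: exp_of_nat_mult)
  finally show ?thesis .
qed

lemma alt_card_zero: "(\<Sum>I\<in>Pow (UNIV :: lab set). (-1::real) ^ card I) = 0"
  using alt_sum_zero[of "UNIV :: lab set" L11 "\<lambda>_. 1"] by simp

lemma CARD_lab: "CARD(lab) = 4"
  by (simp add: UNIV_lab)

lemma card_Pow_lab: "card (Pow (UNIV :: lab set)) = 16"
  by (simp add: card_Pow UNIV_lab)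

lemma final_bound:
  fixes Y :: "lab set \<Rightarrow> real" and p :: real and m q :: nat
  assumes Y01: "\<And>I. 0 \<le> Y I \<and> Y I \<le> 1"
    and diff: "\<And>I. \<bar>Y I - Y {}\<bar> \<le> 32 * p ^ 3"
    and Y0: "Y {} = (1 - p ^ 2) ^ 4"
    and main: "\<bar>\<Sum>I\<in>Pow UNIV. (-1) ^ card I * Y I\<bar> \<le> 16 * p ^ q"
    and p: "0 \<le> p" "p \<le> 1" and m: "2 \<le> m" and mp: "real m * p ^ 3 \<le> 1"
  shows "\<bar>\<Sum>I\<in>Pow UNIV. (-1) ^ card I * Y I ^ m\<bar>
     \<le> 16384 * exp 47 * (real m * p ^ q * exp (- 4 * real m * p ^ 2) + (real m * p ^ 3) ^ 2 * exp (- 4 * real m * p ^ 2))"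
proof -
  define a where "a = Y {}"
  define k where "k = m - 2"
  define M where "M = 1 - 4 * p ^ 2 + 39 * p ^ 3"
  define E where "E = exp (- 4 * real m * p ^ 2)"
  have mk: "m = k + 2" using m unfolding k_def by simp
  have a01: "0 \<le> a" "a \<le> 1" using Y01 unfolding a_def by auto
  have p3: "p ^ 4 \<le> p ^ 3" "p ^ 8 \<le> p ^ 3" "0 \<le> p ^ 6" using p by (auto intro: power_decreasing)
  have aM0: "a \<le> 1 - 4 * p ^ 2 + 7 * p ^ 3"
  proof -
    have "(1 - p ^ 2) ^ 4 = 1 - 4 * p ^ 2 + 6 * p ^ 4 - 4 * p ^ 6 + p ^ 8"
      by (simp add: power2_eq_square power4_eq_xxxx algebra_simps power_numeral_reduce)
    then show ?thesis unfolding a_def Y0 using p3 by linarith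
  qed
  have "0 \<le> p ^ 3" using p by simp
  then have aM: "a \<le> M" using aM0 unfolding M_def by linarith
  have YM: "Y I \<le> M" for I using diff[of I] aM0 unfolding a_def M_def by (simp add: abs_le_iff)
  have M0: "0 \<le> M" using a01 aM by linarith
  have Mk: "M ^ k \<le> exp 47 * E"
  proof -
    have "M ^ k \<le> exp (real k * (M - 1))" by (rule exp_pow_bound[OF M0])
    also have "real k * (M - 1) \<le> 47 + (- 4 * real m * p ^ 2)"
    proof -
      have rk: "real k = real m - 2" using mk by simp
      have "real k * (M - 1) = - 4 * real m * p ^ 2 + 8 * p ^ 2 + 39 * (real m * p ^ 3) - 78 * p ^ 3"
        unfolding rk M_def by (simp add: algebra_simps)
      moreover have "p ^ 2 \<le> 1" using p by (simp add: power_le_one)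
      moreover have "0 \<le> p ^ 3" using p by simp
      ultimately show ?thesis using mp by linarith
    qed
    then have "exp (real k * (M - 1)) \<le> exp (47 + (- 4 * real m * p ^ 2))" by simp
    also have "\<dots> = exp 47 * E" unfolding E_def by (rule exp_add)
    finally show ?thesis .
  qed
  have ak: "a ^ (k + 1) \<le> exp 47 * E"
  proof -
    have "a ^ (k + 1) \<le> a ^ k" using a01 by (simp add: mult_left_le_one_le)
    also have "\<dots> \<le> M ^ k" using a01 aM by (intro power_mono) simp_all
    finally show ?thesis using Mk by linarith
  qed
  define T where "T I = Y I ^ m - a ^ m - real m * a ^ (k + 1) * (Y I - a)" for I
  have Tb: "\<bar>T I\<bar> \<le> real m ^ 2 * (exp 47 * E) * (1024 * p ^ 6)" for I
  proof -
    have "\<bar>T I\<bar> \<le> real ((k + 1) ^ 2) * M ^ k * (Y I - a) ^ 2"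
      unfolding T_def mk using taylor2[of a M "Y I" k] a01 aM Y01[of I] YM[of I] by simp
    also have "\<dots> \<le> real m ^ 2 * (exp 47 * E) * (1024 * p ^ 6)"
    proof (intro mult_mono)
      show "real ((k + 1) ^ 2) \<le> real m ^ 2" using mk by simp
      show "M ^ k \<le> exp 47 * E" by (rule Mk)
      have "\<bar>Y I - a\<bar> \<le> 32 * p ^ 3" using diff[of I] unfolding a_def .
      then have "\<bar>Y I - a\<bar> ^ 2 \<le> (32 * p ^ 3) ^ 2" by (rule power_mono) simp
      moreover have "(32 * p ^ 3) ^ 2 = 1024 * p ^ 6" by (simp add: power2_eq_square power_add[symmetric])
      ultimately show "(Y I - a) ^ 2 \<le> 1024 * p ^ 6" by simp
    qed (use M0 in \<open>simp_all add: E_def\<close>)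
    finally show ?thesis .
  qed
  have ident: "(\<Sum>I\<in>Pow UNIV. (-1) ^ card I * Y I ^ m) =
      (\<Sum>I\<in>Pow UNIV. (-1) ^ card I * T I) + real m * a ^ (k + 1) * (\<Sum>I\<in>Pow UNIV. (-1) ^ card I * Y I)"
  proof -
    have "(\<Sum>I\<in>Pow UNIV. (-1) ^ card I * Y I ^ m) = (\<Sum>I\<in>Pow (UNIV :: lab set). (-1) ^ card I * T I
        + (a ^ m - real m * a ^ (k + 1) * a) * (-1) ^ card I + real m * a ^ (k + 1) * ((-1) ^ card I * Y I))"
      by (rule sum.cong) (simp_all add: T_def algebra_simps)
    also have "\<dots> = (\<Sum>I\<in>Pow UNIV. (-1) ^ card I * T I) + (a ^ m - real m * a ^ (k + 1) * a) * (\<Sum>I\<in>Pow (UNIV :: lab set). (-1) ^ card I)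
        + real m * a ^ (k + 1) * (\<Sum>I\<in>Pow UNIV. (-1) ^ card I * Y I)"
      by (simp add: sum.distrib sum_distrib_left)
    finally show ?thesis using alt_card_zero by simp
  qed
  have s1: "\<bar>\<Sum>I\<in>Pow (UNIV :: lab set). (-1) ^ card I * T I\<bar> \<le> 16 * (real m ^ 2 * (exp 47 * E) * (1024 * p ^ 6))"
  proof -
    have "\<bar>\<Sum>I\<in>Pow (UNIV :: lab set). (-1) ^ card I * T I\<bar> \<le> (\<Sum>I\<in>Pow (UNIV :: lab set). \<bar>(-1) ^ card I * T I\<bar>)"
      by (rule sum_abs)
    also have "\<dots> \<le> (\<Sum>I\<in>Pow (UNIV :: lab set). real m ^ 2 * (exp 47 * E) * (1024 * p ^ 6))"
      by (rule sum_mono) (simp add: abs_mult Tb)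
    also have "\<dots> = 16 * (real m ^ 2 * (exp 47 * E) * (1024 * p ^ 6))" by (simp add: CARD_lab)
    finally show ?thesis .
  qed
  have s2: "\<bar>real m * a ^ (k + 1) * (\<Sum>I\<in>Pow UNIV. (-1) ^ card I * Y I)\<bar> \<le> real m * (exp 47 * E) * (16 * p ^ q)"
  proof -
    have "\<bar>real m * a ^ (k + 1) * (\<Sum>I\<in>Pow UNIV. (-1) ^ card I * Y I)\<bar> = real m * a ^ (k + 1) * \<bar>\<Sum>I\<in>Pow UNIV. (-1) ^ card I * Y I\<bar>"
      using a01 by (simp add: abs_mult)
    also have "\<dots> \<le> real m * (exp 47 * E) * (16 * p ^ q)"
      using ak main a01 by (intro mult_mono) (simp_all add: E_def)
    finally show ?thesis .
  qed
  have "\<bar>\<Sum>I\<in>Pow UNIV. (-1) ^ card I * Y I ^ m\<bar> \<le> 16 * (real m ^ 2 * (exp 47 * E) * (1024 * p ^ 6)) + real m * (exp 47 * E) * (16 * p ^ q)"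
    unfolding ident using s1 s2 abs_triangle_ineq by (smt (verit))
  also have "\<dots> \<le> 16384 * exp 47 * (real m * p ^ q * E + (real m * p ^ 3) ^ 2 * E)"
  proof -
    have e: "0 \<le> exp 47 * E * real m * p ^ q" using p unfolding E_def by simp
    have "16 * (real m ^ 2 * (exp 47 * E) * (1024 * p ^ 6)) = 16384 * exp 47 * ((real m * p ^ 3) ^ 2 * E)"
      by (simp add: power_mult_distrib power2_eq_square algebra_simps power_add[symmetric])
    moreover have "real m * (exp 47 * E) * (16 * p ^ q) \<le> 16384 * exp 47 * (real m * p ^ q * E)"
      using e by (simp add: algebra_simps)
    ultimately show ?thesis by (simp add: algebra_simps)
  qed
  finally show ?thesis unfolding E_def .
qed

definition Xf :: "nat \<Rightarrow> real \<Rightarrow> lab set \<Rightarrow> lab set \<Rightarrow> lab set \<Rightarrow> real" where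
  "Xf i p J K I = (\<Sum>L\<in>Pow (K \<inter> J). (-1) ^ card L * p ^ hh i I L)
      - real (card ((J - K) \<union> (K - J))) * (p ^ 2 * (1 - p) ^ 6)"

definition Yf :: "nat \<Rightarrow> real \<Rightarrow> lab set \<Rightarrow> real" where
  "Yf i p I = (\<Sum>L\<in>Pow UNIV. (-1) ^ card L * p ^ hh i I L)"

lemma hh_insert: "a \<notin> L \<Longrightarrow> hh i (insert a I) L = hh i I L"
proof -
  assume a: "a \<notin> L"
  then have "L \<inter> insert a I = L \<inter> I" "L - insert a I = L - I" by auto
  then show ?thesis by (simp add: hh_def)
qed

lemma xval_Xf:
  assumes H: "is_H n i I V e"
  shows "xval p e J K = Xf i p J K I"
  unfolding xval_def Xf_def using isH_ucard[OF H] by simp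

lemma pi_H:
  assumes H: "is_H n i I V e" and p: "0 \<le> p" "p \<le> 1"
  shows "pi_family n m p V (range e) (CC_J V e J) = (\<Sum>K\<in>Pow UNIV. (-1) ^ card K * Xf i p J K I ^ m)"
  using pi_formula[OF isH_basic(1,2)[OF H] isH_basic(3,4)[OF H] isH_inj[OF H] p, of m J] xval_Xf[OF H]
  by simp

lemma Xf_insert:
  assumes a: "a \<notin> K \<inter> J"
  shows "Xf i p J K (insert a I) = Xf i p J K I"
proof -
  have h: "hh i (insert a I) L = hh i I L" if "L \<in> Pow (K \<inter> J)" for L
    using that a by (intro hh_insert) auto
  have "(\<Sum>L\<in>Pow (K \<inter> J). (-1) ^ card L * p ^ hh i (insert a I) L) = (\<Sum>L\<in>Pow (K \<inter> J). (-1) ^ card L * p ^ hh i I L)"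
    by (rule sum.cong) (simp_all add: h)
  then show ?thesis unfolding Xf_def by simp
qed

lemma claim1:
  assumes J: "J \<subset> UNIV"
  shows "(\<Sum>I\<in>Pow UNIV. (-1) ^ card I * (\<Sum>K\<in>Pow UNIV. (-1) ^ card K * Xf i p J K I ^ m)) = 0"
proof -
  obtain a where a: "a \<notin> J" using J by blast
  show ?thesis
    by (rule alt_sum_zero[of UNIV a]) (use a in \<open>simp_all add: Xf_insert\<close>)
qed

lemma extract_top:
  fixes F :: "lab set \<Rightarrow> lab set \<Rightarrow> real"
  assumes F: "\<And>K a I. a \<notin> K \<Longrightarrow> F K (insert a I) = F K I"
  shows "(\<Sum>I\<in>Pow UNIV. (-1) ^ card I * (\<Sum>K\<in>Pow UNIV. (-1) ^ card K * F K I))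
       = (\<Sum>I\<in>Pow UNIV. (-1) ^ card I * F UNIV I)"
proof -
  define g where "g K = (-1) ^ card K * (\<Sum>I\<in>Pow (UNIV :: lab set). (-1) ^ card I * F K I)" for K
  have "(\<Sum>I\<in>Pow UNIV. (-1) ^ card I * (\<Sum>K\<in>Pow UNIV. (-1) ^ card K * F K I))
      = (\<Sum>I\<in>Pow UNIV. \<Sum>K\<in>Pow UNIV. (-1) ^ card I * ((-1) ^ card K * F K I))"
    by (simp add: sum_distrib_left)
  also have "\<dots> = (\<Sum>K\<in>Pow UNIV. \<Sum>I\<in>Pow UNIV. (-1) ^ card I * ((-1) ^ card K * F K I))"
    by (rule sum.swap)
  also have "\<dots> = (\<Sum>K\<in>Pow UNIV. g K)"
    unfolding g_def by (simp add: sum_distrib_left mult.left_commute)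
  also have "\<dots> = g UNIV + (\<Sum>K\<in>Pow UNIV - {UNIV}. g K)"
    by (rule sum.remove) simp_all
  also have "(\<Sum>K\<in>Pow UNIV - {UNIV}. g K) = 0"
  proof (rule sum.neutral, rule ballI)
    fix K :: "lab set" assume "K \<in> Pow UNIV - {UNIV}"
    then obtain a where a: "a \<notin> K" by auto
    have "(\<Sum>I\<in>Pow (UNIV :: lab set). (-1) ^ card I * F K I) = 0"
      by (rule alt_sum_zero[of UNIV a]) (use a F in simp_all)
    then show "g K = 0" unfolding g_def by simp
  qed
  finally show ?thesis unfolding g_def by (simp add: CARD_lab)
qed

lemma claim2_red:
  "(\<Sum>I\<in>Pow UNIV. (-1) ^ card I * (\<Sum>K\<in>Pow UNIV. (-1) ^ card K * Xf i p UNIV K I ^ m))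
    = (\<Sum>I\<in>Pow UNIV. (-1) ^ card I * Yf i p I ^ m)"
proof -
  have "(\<Sum>I\<in>Pow UNIV. (-1) ^ card I * (\<Sum>K\<in>Pow UNIV. (-1) ^ card K * Xf i p UNIV K I ^ m))
      = (\<Sum>I\<in>Pow UNIV. (-1) ^ card I * Xf i p UNIV UNIV I ^ m)"
    by (rule extract_top[where F = "\<lambda>K I. Xf i p UNIV K I ^ m"]) (simp add: Xf_insert)
  also have "\<dots> = (\<Sum>I\<in>Pow UNIV. (-1) ^ card I * Yf i p I ^ m)"
    by (simp add: Xf_def Yf_def)
  finally show ?thesis .
qed

lemma Yf_01:
  assumes H: "is_H n i I V e" and p: "0 \<le> p" "p \<le> 1"
  shows "0 \<le> Yf i p I \<and> Yf i p I \<le> 1"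
proof -
  note B = isH_basic[OF H]
  have "Yf i p I = xval p e UNIV UNIV" using xval_Xf[OF H] by (simp add: Xf_def Yf_def)
  also have "\<dots> = (\<Sum>S\<in>Yset V e UNIV UNIV. wt p V S)"
    by (rule Yset_sum[symmetric]) (use B isH_inj[OF H] p in auto)
  also have "\<dots> = (\<Sum>S\<in>Yset V e UNIV UNIV. wt p V S) ^ 1" by simp
  also have "\<dots> = measure_pmf.prob (rig n 1 p) {\<omega>. \<forall>a<1. tr V a \<omega> \<in> Yset V e UNIV UNIV}"
    by (rule rows[symmetric]) (use B p in \<open>auto simp: Yset_def\<close>)
  finally show ?thesis by simp
qed

lemma Yf_diff:
  assumes H: "is_H n i I V e" and p: "0 \<le> p" "p \<le> 1"
  shows "\<bar>Yf i p I - Yf i p {}\<bar> \<le> 32 * p ^ 3"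
proof -
  have t: "\<bar>(-1) ^ card L * p ^ hh i I L - (-1) ^ card L * p ^ hh i {} L\<bar> \<le> 2 * p ^ 3" for L
  proof (cases "card L \<le> 1")
    case True
    then show ?thesis using hh_le1[OF True, of i I] hh_le1[OF True, of i "{}"] p by simp
  next
    case False
    then have "2 \<le> card L" by simp
    then have h1: "3 \<le> hh i I L" "3 \<le> hh i {} L" using hh_ge3[OF H] hh_empty[of i L] by auto
    have x: "0 \<le> p ^ hh i I L" "p ^ hh i I L \<le> p ^ 3" using p h1(1) by (auto intro: power_decreasing)
    have y: "0 \<le> p ^ hh i {} L" "p ^ hh i {} L \<le> p ^ 3" using p h1(2) by (auto intro: power_decreasing)
    have "\<bar>(-1) ^ card L * p ^ hh i I L - (-1) ^ card L * p ^ hh i {} L\<bar> = \<bar>p ^ hh i I L - p ^ hh i {} L\<bar>"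
      by (simp add: right_diff_distrib[symmetric] abs_mult)
    also have "\<dots> \<le> 2 * p ^ 3" using x y by (simp add: abs_le_iff)
    finally show ?thesis .
  qed
  have "\<bar>Yf i p I - Yf i p {}\<bar> = \<bar>\<Sum>L\<in>Pow UNIV. ((-1) ^ card L * p ^ hh i I L - (-1) ^ card L * p ^ hh i {} L)\<bar>"
    unfolding Yf_def by (simp add: sum_subtractf)
  also have "\<dots> \<le> (\<Sum>L\<in>Pow (UNIV :: lab set). \<bar>(-1) ^ card L * p ^ hh i I L - (-1) ^ card L * p ^ hh i {} L\<bar>)"
    by (rule sum_abs)
  also have "\<dots> \<le> (\<Sum>L\<in>Pow (UNIV :: lab set). 2 * p ^ 3)"
    by (rule sum_mono) (rule t)
  also have "\<dots> = 32 * p ^ 3" by (simp add: CARD_lab)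
  finally show ?thesis .
qed

lemma Yf_empty: "Yf i p {} = (1 - p ^ 2) ^ 4"
proof -
  have "Yf i p {} = (\<Sum>L\<in>Pow (UNIV :: lab set). (\<Prod>x\<in>L. - (p ^ 2)) * (\<Prod>x\<in>UNIV - L. 1))"
    unfolding Yf_def hh_empty
  proof (rule sum.cong)
    fix L :: "lab set"
    have "(\<Prod>x\<in>L. - (p ^ 2)) * (\<Prod>x\<in>UNIV - L. (1::real)) = (- (p ^ 2)) ^ card L" by simp
    also have "\<dots> = (-1) ^ card L * (p ^ 2) ^ card L" by (rule power_minus)
    also have "\<dots> = (-1) ^ card L * p ^ (2 * card L)" by (simp only: power_mult)
    finally show "(-1) ^ card L * p ^ (2 * card L) = (\<Prod>x\<in>L. - (p ^ 2)) * (\<Prod>x\<in>UNIV - L. (1::real))" by simp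
  qed simp
  also have "\<dots> = (\<Prod>x\<in>(UNIV :: lab set). - (p ^ 2) + 1)"
    by (rule prod_add[symmetric]) simp
  also have "\<dots> = (1 - p ^ 2) ^ 4" by (simp add: CARD_lab)
  finally show ?thesis .
qed

lemma Yf_main:
  assumes p: "0 \<le> p" "p \<le> 1"
  shows "\<bar>\<Sum>I\<in>Pow UNIV. (-1) ^ card I * Yf i p I\<bar> \<le> 16 * p ^ (if i = 2 then 4 else 5)"
proof -
  define q :: nat where "q = (if i = 2 then 4 else 5)"
  have "(\<Sum>I\<in>Pow UNIV. (-1) ^ card I * Yf i p I) = (\<Sum>I\<in>Pow UNIV. (-1) ^ card I * p ^ hh i I UNIV)"
    unfolding Yf_def by (rule extract_top[where F = "\<lambda>L I. p ^ hh i I L"]) (simp add: hh_insert)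
  also have "\<bar>\<dots>\<bar> \<le> (\<Sum>I\<in>Pow (UNIV :: lab set). \<bar>(-1) ^ card I * p ^ hh i I UNIV\<bar>)" by (rule sum_abs)
  also have "\<dots> \<le> (\<Sum>I\<in>Pow (UNIV :: lab set). p ^ q)"
  proof (rule sum_mono)
    fix I :: "lab set"
    have "q \<le> hh i I UNIV" using hU_ge[of i I] unfolding hh_def q_def by simp
    then have "p ^ hh i I UNIV \<le> p ^ q" using p by (intro power_decreasing) simp_all
    then show "\<bar>(-1) ^ card I * p ^ hh i I UNIV\<bar> \<le> p ^ q" using p by (simp add: abs_mult)
  qed
  also have "\<dots> = 16 * p ^ q" by (simp add: CARD_lab)
  finally show ?thesis unfolding q_def .
qed

theorem lemma6p3:
  fixes i :: nat
  assumes "i \<in> {1, 2, 3}"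
  shows
   "(\<forall>(n::nat) (m::nat) (p::real) (V :: lab set \<Rightarrow> nat set) (e :: lab set \<Rightarrow> lab \<Rightarrow> nat set) (J :: lab set).
       8 \<le> n \<and> 0 \<le> p \<and> p \<le> 1 \<and> J \<subset> UNIV \<and> (\<forall>I. is_H n i I (V I) (e I)) \<longrightarrow>
       (\<Sum>I\<in>Pow UNIV. (-1::real) ^ card I *
          pi_family n m p (V I) (range (e I)) (CC_J (V I) (e I) J)) = 0)
    \<and>
    (\<exists>(m0::nat) (C::real). C > 0 \<and>
       (\<forall>(n::nat) (m::nat) (p::real) (V :: lab set \<Rightarrow> nat set) (e :: lab set \<Rightarrow> lab \<Rightarrow> nat set).
          8 \<le> n \<and> 0 \<le> p \<and> p \<le> 1 \<and> real m * p ^ 3 \<le> 1 \<and> m > m0 \<and>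
          (\<forall>I. is_H n i I (V I) (e I)) \<longrightarrow>
          \<bar>\<Sum>I\<in>Pow UNIV. (-1::real) ^ card I *
             pi_family n m p (V I) (range (e I)) (CC_J (V I) (e I) UNIV)\<bar>
          \<le> (if i = 2
              then C * (real m * p ^ 4 * exp (- 4 * real m * p ^ 2)
                        + (real m * p ^ 3) ^ 2 * exp (- 4 * real m * p ^ 2))
              else C * (real m * p ^ 5 * exp (- 4 * real m * p ^ 2)
                        + (real m * p ^ 3) ^ 2 * exp (- 4 * real m * p ^ 2)))))"
proof -
  have p1: "\<forall>(n::nat) (m::nat) (p::real) (V :: lab set \<Rightarrow> nat set) (e :: lab set \<Rightarrow> lab \<Rightarrow> nat set) (J :: lab set).
       8 \<le> n \<and> 0 \<le> p \<and> p \<le> 1 \<and> J \<subset> UNIV \<and> (\<forall>I. is_H n i I (V I) (e I)) \<longrightarrow>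
       (\<Sum>I\<in>Pow UNIV. (-1::real) ^ card I *
          pi_family n m p (V I) (range (e I)) (CC_J (V I) (e I) J)) = 0"
  proof (intro allI impI)
    fix n m :: nat and p :: real and V :: "lab set \<Rightarrow> nat set" and e :: "lab set \<Rightarrow> lab \<Rightarrow> nat set" and J :: "lab set"
    assume h: "8 \<le> n \<and> 0 \<le> p \<and> p \<le> 1 \<and> J \<subset> UNIV \<and> (\<forall>I. is_H n i I (V I) (e I))"
    have "(\<Sum>I\<in>Pow UNIV. (-1::real) ^ card I * pi_family n m p (V I) (range (e I)) (CC_J (V I) (e I) J))
        = (\<Sum>I\<in>Pow UNIV. (-1) ^ card I * (\<Sum>K\<in>Pow UNIV. (-1) ^ card K * Xf i p J K I ^ m))"
    proof (rule sum.cong)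
      fix I :: "lab set"
      have "is_H n i I (V I) (e I)" using h by blast
      then show "(-1::real) ^ card I * pi_family n m p (V I) (range (e I)) (CC_J (V I) (e I) J)
          = (-1) ^ card I * (\<Sum>K\<in>Pow UNIV. (-1) ^ card K * Xf i p J K I ^ m)"
        using pi_H[of n i I "V I" "e I" p m J] h by simp
    qed simp
    also have "\<dots> = 0" by (rule claim1) (use h in blast)
    finally show "(\<Sum>I\<in>Pow UNIV. (-1::real) ^ card I * pi_family n m p (V I) (range (e I)) (CC_J (V I) (e I) J)) = 0" .
  qed
  have p2: "\<exists>(m0::nat) (C::real). C > 0 \<and>
       (\<forall>(n::nat) (m::nat) (p::real) (V :: lab set \<Rightarrow> nat set) (e :: lab set \<Rightarrow> lab \<Rightarrow> nat set).
          8 \<le> n \<and> 0 \<le> p \<and> p \<le> 1 \<and> real m * p ^ 3 \<le> 1 \<and> m > m0 \<and>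
          (\<forall>I. is_H n i I (V I) (e I)) \<longrightarrow>
          \<bar>\<Sum>I\<in>Pow UNIV. (-1::real) ^ card I *
             pi_family n m p (V I) (range (e I)) (CC_J (V I) (e I) UNIV)\<bar>
          \<le> (if i = 2
              then C * (real m * p ^ 4 * exp (- 4 * real m * p ^ 2)
                        + (real m * p ^ 3) ^ 2 * exp (- 4 * real m * p ^ 2))
              else C * (real m * p ^ 5 * exp (- 4 * real m * p ^ 2)
                        + (real m * p ^ 3) ^ 2 * exp (- 4 * real m * p ^ 2))))"
  proof (intro exI[of _ "1::nat"] exI[of _ "16384 * exp 47 :: real"] conjI allI impI)
    show "(0::real) < 16384 * exp 47" by simp
    fix n m :: nat and p :: real and V :: "lab set \<Rightarrow> nat set" and e :: "lab set \<Rightarrow> lab \<Rightarrow> nat set"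
    assume h: "8 \<le> n \<and> 0 \<le> p \<and> p \<le> 1 \<and> real m * p ^ 3 \<le> 1 \<and> m > 1 \<and> (\<forall>I. is_H n i I (V I) (e I))"
    have H: "\<And>I. is_H n i I (V I) (e I)" using h by blast
    have p: "0 \<le> p" "p \<le> 1" using h by auto
    have "(\<Sum>I\<in>Pow UNIV. (-1::real) ^ card I * pi_family n m p (V I) (range (e I)) (CC_J (V I) (e I) UNIV))
        = (\<Sum>I\<in>Pow UNIV. (-1) ^ card I * (\<Sum>K\<in>Pow UNIV. (-1) ^ card K * Xf i p UNIV K I ^ m))"
    proof (rule sum.cong)
      fix I :: "lab set"
      show "(-1::real) ^ card I * pi_family n m p (V I) (range (e I)) (CC_J (V I) (e I) UNIV)
          = (-1) ^ card I * (\<Sum>K\<in>Pow UNIV. (-1) ^ card K * Xf i p UNIV K I ^ m)"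
        using pi_H[OF H[of I] p, of m UNIV] by simp
    qed simp
    also have "\<dots> = (\<Sum>I\<in>Pow UNIV. (-1) ^ card I * Yf i p I ^ m)" by (rule claim2_red)
    finally have eq: "(\<Sum>I\<in>Pow UNIV. (-1::real) ^ card I * pi_family n m p (V I) (range (e I)) (CC_J (V I) (e I) UNIV))
        = (\<Sum>I\<in>Pow UNIV. (-1) ^ card I * Yf i p I ^ m)" .
    have fb: "\<bar>\<Sum>I\<in>Pow UNIV. (-1) ^ card I * Yf i p I ^ m\<bar>
       \<le> 16384 * exp 47 * (real m * p ^ q * exp (- 4 * real m * p ^ 2) + (real m * p ^ 3) ^ 2 * exp (- 4 * real m * p ^ 2))"
      if mq: "\<bar>\<Sum>I\<in>Pow UNIV. (-1) ^ card I * Yf i p I\<bar> \<le> 16 * p ^ q" for q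
    proof (rule final_bound)
      show "\<And>I. 0 \<le> Yf i p I \<and> Yf i p I \<le> 1" using Yf_01[OF H p] .
      show "\<And>I. \<bar>Yf i p I - Yf i p {}\<bar> \<le> 32 * p ^ 3" using Yf_diff[OF H p] .
      show "Yf i p {} = (1 - p ^ 2) ^ 4" by (rule Yf_empty)
      show "\<bar>\<Sum>I\<in>Pow UNIV. (-1) ^ card I * Yf i p I\<bar> \<le> 16 * p ^ q" by (rule mq)
      show "0 \<le> p" "p \<le> 1" by (rule p(1), rule p(2))
      show "2 \<le> m" using h by auto
      show "real m * p ^ 3 \<le> 1" using h by auto
    qed
    have main: "\<bar>\<Sum>I\<in>Pow UNIV. (-1) ^ card I * Yf i p I\<bar> \<le> 16 * p ^ (if i = 2 then 4 else 5)"
      by (rule Yf_main[OF p])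
    show "\<bar>\<Sum>I\<in>Pow UNIV. (-1::real) ^ card I *
             pi_family n m p (V I) (range (e I)) (CC_J (V I) (e I) UNIV)\<bar>
          \<le> (if i = 2
              then 16384 * exp 47 * (real m * p ^ 4 * exp (- 4 * real m * p ^ 2)
                        + (real m * p ^ 3) ^ 2 * exp (- 4 * real m * p ^ 2))
              else 16384 * exp 47 * (real m * p ^ 5 * exp (- 4 * real m * p ^ 2)
                        + (real m * p ^ 3) ^ 2 * exp (- 4 * real m * p ^ 2)))"
    proof (cases "i = 2")
      case True
      then show ?thesis unfolding eq using fb[of 4] main by simp
    next
      case False
      then show ?thesis unfolding eq using fb[of 5] main by simp
    qed
  qed
  show ?thesis by (rule conjI[OF p1 p2])
qed

end
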